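(* Let $N\ge2$ and $k\ge2$ be fixed integers and $\epsilon>0$. Let the class distribution be $\pi_i=\frac{\epsilon}{(N-1)(1+\epsilon)}$ for $1\le i\le N-1$ and $\pi_N=\frac{1}{1+\epsilon}$. In one round of the large-batch model of the $k$IC batch labeling algorithm, the resulting class distribution $\boldsymbol{\pi}'$ and the single-round average query rate $R_2^{kIC}=1/(k\,P(s\in\mathcal{L}))$ satisfy, as $\epsilon\to0$, $$\pi'_N=1-k\epsilon+o(\epsilon),\qquad \pi'_i=\frac{k\epsilon}{N-1}+o(\epsilon)\ (1\le i\le N-1),\qquad R_2^{kIC}=\frac{1}{k-1}+\frac{k}{(k-1)^2}\epsilon+o(\epsilon).$$
   Context: Large-batch model of one round: each $k$IC query consists of $k$ samples with i.i.d. classes drawn from $\boldsymbol{\pi}$; an error-free oracle reveals which samples share a class; one representative of each class present is returned to the next batch and the other samples are settled. $P(s\in\mathcal{L})$ is the expected number of settled samples per query divided by $k$, i.e. $1-\frac1k\sum_{j=1}^N(1-(1-\pi_j)^k)$, and $\pi'_i=\frac{1-(1-\pi_i)^k}{N-\sum_{j}(1-\pi_j)^k}$ is the class distribution of the returned batch. *)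

theory Defs
  imports "HOL-Analysis.Analysis" "HOL-Library.Landau_Symbols"
begin

definition settled_prob :: "nat \<Rightarrow> nat \<Rightarrow> (nat \<Rightarrow> real) \<Rightarrow> real" where
  "settled_prob N k \<pi> = 1 - (1 / real k) * (\<Sum>j=1..N. 1 - (1 - \<pi> j) ^ k)"

definition next_dist :: "nat \<Rightarrow> nat \<Rightarrow> (nat \<Rightarrow> real) \<Rightarrow> nat \<Rightarrow> real" where
  "next_dist N k \<pi> i = (1 - (1 - \<pi> i) ^ k) / (real N - (\<Sum>j=1..N. (1 - \<pi> j) ^ k))"

definition query_rate_R2 :: "nat \<Rightarrow> nat \<Rightarrow> (nat \<Rightarrow> real) \<Rightarrow> real" where
  "query_rate_R2 N k \<pi> = 1 / (real k * settled_prob N k \<pi>)"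

definition pi_eps :: "nat \<Rightarrow> real \<Rightarrow> nat \<Rightarrow> real" where
  "pi_eps N \<epsilon> i = (if i = N then 1 / (1 + \<epsilon>) else \<epsilon> / ((real N - 1) * (1 + \<epsilon>)))"

end

theory Submission
  imports Defs
begin

lemma deriv_smallo:
  fixes g :: "real \<Rightarrow> real"
  assumes "(g has_real_derivative d) (at 0)" and "g 0 = v"
  shows "(\<lambda>e. g e - (v + d * e)) \<in> o[at_right 0](\<lambda>e. e)"
proof (rule smalloI_tendsto)
  have "((\<lambda>y. (g y - g 0) / (y - 0)) \<longlongrightarrow> d) (at 0 within {0<..})"
    using has_field_derivative_at_within[OF assms(1)] unfolding has_field_derivative_iff .
  then have "((\<lambda>y. (g y - g 0) / y - d) \<longlongrightarrow> 0) (at_right 0)"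
    using tendsto_diff[OF _ tendsto_const[of d]] by fastforce
  then show "((\<lambda>e. (g e - (v + d * e)) / e) \<longlongrightarrow> 0) (at_right 0)"
  proof (rule Lim_transform_eventually)
    show "\<forall>\<^sub>F y in at_right 0. (g y - g 0) / y - d = (g y - (v + d * y)) / y"
      unfolding eventually_at_filter using assms(2)
      by (intro always_eventually) (auto simp: field_simps)
  qed
  show "\<forall>\<^sub>F x in at_right 0. (x::real) \<noteq> 0"
    by (simp add: eventually_at_filter)
qed

lemma sum_split:
  assumes "N \<ge> 2"
  shows "(\<Sum>j=1..N. f (pi_eps N e j)) = (real N - 1) * f (e / ((real N - 1) * (1 + e))) + f (1/(1+e))"
proof -
  have "{1..N} = insert N {1..N-1}" using assms by auto
  then have "(\<Sum>j=1..N. f (pi_eps N e j)) = f (pi_eps N e N) + (\<Sum>j=1..N-1. f (pi_eps N e j))"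
    using assms by (simp add: sum.insert)
  also have "(\<Sum>j=1..N-1. f (pi_eps N e j)) = (\<Sum>j=1..N-1. f (e / ((real N - 1) * (1 + e))))"
    by (rule sum.cong) (auto simp: pi_eps_def)
  finally show ?thesis using assms by (simp add: pi_eps_def of_nat_diff)
qed

lemma derivs:
  fixes c :: real and k :: nat
  assumes "c > 0" "k \<ge> 2"
  shows "((\<lambda>e. (1 - e/(c*(1+e)))^k) has_real_derivative (- real k / c)) (at 0)"
    and "((\<lambda>e. (1 - 1/(1+e))^k) has_real_derivative 0) (at 0)"
proof -
  show "((\<lambda>e. (1 - e/(c*(1+e)))^k) has_real_derivative (- real k / c)) (at 0)"
    using assms by (auto intro!: derivative_eq_intros simp: field_simps)
  show "((\<lambda>e. (1 - 1/(1+e))^k) has_real_derivative 0) (at 0)"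
    using assms by (auto intro!: derivative_eq_intros simp: field_simps)
qed

theorem corollary4:
  fixes N k :: nat
  assumes "N \<ge> 2" and "k \<ge> 2"
  shows "((\<lambda>\<epsilon>. next_dist N k (pi_eps N \<epsilon>) N - (1 - real k * \<epsilon>)) \<in> o[at_right 0](\<lambda>\<epsilon>. \<epsilon>))
    \<and> (\<forall>i\<in>{1..N-1}. (\<lambda>\<epsilon>. next_dist N k (pi_eps N \<epsilon>) i - real k * \<epsilon> / (real N - 1))
            \<in> o[at_right 0](\<lambda>\<epsilon>. \<epsilon>))
    \<and> ((\<lambda>\<epsilon>. query_rate_R2 N k (pi_eps N \<epsilon>) - (1 / (real k - 1) + real k / (real k - 1)^2 * \<epsilon>))
            \<in> o[at_right 0](\<lambda>\<epsilon>. \<epsilon>))"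
proof -
  define c where "c = real N - 1"
  have c: "c > 0" using assms by (simp add: c_def)
  define A where "A = (\<lambda>e::real. (1 - e/(c*(1+e)))^k)"
  define B where "B = (\<lambda>e::real. (1 - 1/(1+e))^k)"
  define S where "S = (\<lambda>e. real N - (c * A e + B e))"
  have dA: "(A has_real_derivative (- real k / c)) (at 0)"
    unfolding A_def using derivs(1)[OF c assms(2)] .
  have dB: "(B has_real_derivative 0) (at 0)"
    unfolding B_def using derivs(2)[OF c assms(2)] .
  have dS: "(S has_real_derivative real k) (at 0)"
    unfolding S_def using c by (auto intro!: derivative_eq_intros dA dB)
  have A0: "A 0 = 1" by (simp add: A_def)
  have B0: "B 0 = 0" using assms by (simp add: B_def)
  have S0: "S 0 = 1" using A0 B0 by (simp add: S_def c_def)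
  have sumeq: "(\<Sum>j=1..N. (1 - pi_eps N e j)^k) = c * A e + B e" for e
    using sum_split[OF assms(1), of "\<lambda>x. (1 - x)^k" e] by (simp add: A_def B_def c_def)
  have ndN: "next_dist N k (pi_eps N e) N = (1 - B e) / S e" for e
    unfolding next_dist_def sumeq S_def by (simp add: pi_eps_def B_def)
  have ndi: "next_dist N k (pi_eps N e) i = (1 - A e) / S e" if "i \<in> {1..N-1}" for e i
  proof -
    have "i \<noteq> N" using that assms by auto
    then show ?thesis unfolding next_dist_def sumeq S_def by (simp add: pi_eps_def A_def c_def)
  qed
  have qr: "query_rate_R2 N k (pi_eps N e) = 1 / (real k - S e)" for e
  proof -
    have "(\<Sum>j=1..N. 1 - (1 - pi_eps N e j)^k) = S e"
      using sumeq[of e] by (simp add: sum_subtractf S_def)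
    moreover have "real k * (1 - 1 / real k * S e) = real k - S e" using assms
      by (simp add: field_simps)
    ultimately show ?thesis
      unfolding query_rate_R2_def settled_prob_def by simp
  qed
  have 1: "((\<lambda>e. (1 - B e) / S e) has_real_derivative (- real k)) (at 0)"
    using S0 B0 by (auto intro!: derivative_eq_intros dB dS)
  have 2: "((\<lambda>e. (1 - A e) / S e) has_real_derivative (real k / c)) (at 0)"
    using S0 A0 by (auto intro!: derivative_eq_intros dA dS)
  have 3: "((\<lambda>e. 1 / (real k - S e)) has_real_derivative (real k / (real k - 1)^2)) (at 0)"
    using S0 assms by (auto intro!: derivative_eq_intros dS simp: power2_eq_square)
  have r1: "(\<lambda>e. (1 - B e) / S e - (1 + (- real k) * e)) \<in> o[at_right 0](\<lambda>e. e)"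
    by (rule deriv_smallo[OF 1]) (simp add: S0 B0)
  have r2: "(\<lambda>e. (1 - A e) / S e - (0 + (real k / c) * e)) \<in> o[at_right 0](\<lambda>e. e)"
    by (rule deriv_smallo[OF 2]) (simp add: S0 A0)
  have r3: "(\<lambda>e. 1 / (real k - S e) - (1 / (real k - 1) + (real k / (real k - 1)^2) * e)) \<in> o[at_right 0](\<lambda>e. e)"
    by (rule deriv_smallo[OF 3]) (simp add: S0)
  show ?thesis
  proof (intro conjI ballI)
    show "(\<lambda>\<epsilon>. next_dist N k (pi_eps N \<epsilon>) N - (1 - real k * \<epsilon>)) \<in> o[at_right 0](\<lambda>\<epsilon>. \<epsilon>)"
      using r1 by (simp add: ndN)
    fix i assume i: "i \<in> {1..N-1}"
    show "(\<lambda>\<epsilon>. next_dist N k (pi_eps N \<epsilon>) i - real k * \<epsilon> / (real N - 1)) \<in> o[at_right 0](\<lambda>\<epsilon>. \<epsilon>)"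
      using r2 by (simp add: ndi[OF i] c_def)
  next
    show "(\<lambda>\<epsilon>. query_rate_R2 N k (pi_eps N \<epsilon>) - (1 / (real k - 1) + real k / (real k - 1)^2 * \<epsilon>)) \<in> o[at_right 0](\<lambda>\<epsilon>. \<epsilon>)"
      using r3 by (simp add: qr)
  qed
qed

end
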